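(* Let $n\ge 1$ and $\alpha,\beta>0$, and consider the TASEP with open boundaries on $n$ sites with entry rate $\alpha$ and exit rate $\beta$. For integers $m,k\ge 0$ define $$N_{m,k}(\alpha,\beta)=\alpha^k\beta^m\sum_{j=0}^{m}\sum_{\ell=0}^{k}\alpha^j\beta^\ell\left(\binom{k+j-1}{j}\binom{m+\ell-1}{\ell}-\binom{k+j-1}{j-1}\binom{m+\ell-1}{\ell-1}\right),$$ and $Z_n(\alpha,\beta)=\sum_{k=0}^{n}N_{n-k,k}(\alpha,\beta)$. Then for each $0\le k\le n$, the stationary probability that exactly $k$ of the $n$ sites are occupied by particles equals $N_{n-k,k}(\alpha,\beta)/Z_n(\alpha,\beta)$.
   Context: Binomial coefficients are $\binom{a}{b}=a(a-1)\cdots(a-b+1)/b!$ for integers $a$ and $b\ge 0$ (so $\binom{-1}{0}=1$), and $\binom{a}{b}=0$ for $b<0$. The TASEP (totally asymmetric simple exclusion process) with open boundaries on $n$ sites is the continuous-time Markov chain on $\{0,1\}^n$ (1 = particle at that site, 0 = hole) with transitions: if site $1$ is empty, a particle enters there at rate $\alpha$; if site $n$ is occupied, that particle exits at rate $\beta$; for $1\le i<n$, if site $i$ is occupied and site $i+1$ is empty, the particle hops from $i$ to $i+1$ at rate $1$. For $\alpha,\beta>0$ it has a unique stationary distribution. *)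

theory Defs
  imports Complex_Main
begin

definition ibinom :: "int \<Rightarrow> int \<Rightarrow> real" where
  "ibinom a b = (if b < 0 then 0 else (real_of_int a) gchoose (nat b))"

definition Nmk :: "real \<Rightarrow> real \<Rightarrow> nat \<Rightarrow> nat \<Rightarrow> real" where
  "Nmk \<alpha> \<beta> m k = \<alpha> ^ k * \<beta> ^ m *
     (\<Sum>j=0..m. \<Sum>l=0..k. \<alpha> ^ j * \<beta> ^ l *
        (ibinom (int k + int j - 1) (int j) * ibinom (int m + int l - 1) (int l)
         - ibinom (int k + int j - 1) (int j - 1) * ibinom (int m + int l - 1) (int l - 1)))"

definition Zn :: "real \<Rightarrow> real \<Rightarrow> nat \<Rightarrow> real" where
  "Zn \<alpha> \<beta> n = (\<Sum>k=0..n. Nmk \<alpha> \<beta> (n - k) k)"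

text \<open>States of the TASEP on n sites: boolean lists of length n
  (entry i, 0-based, is site i+1; True = particle).\<close>
definition tasep_states :: "nat \<Rightarrow> bool list set" where
  "tasep_states n = {x. length x = n}"

definition tasep_rate :: "real \<Rightarrow> real \<Rightarrow> bool list \<Rightarrow> bool list \<Rightarrow> real" where
  "tasep_rate \<alpha> \<beta> x y =
     (if \<not> x ! 0 \<and> y = x[0 := True] then \<alpha> else 0)
   + (if x ! (length x - 1) \<and> y = x[length x - 1 := False] then \<beta> else 0)
   + (\<Sum>i<length x - 1. if x ! i \<and> \<not> x ! Suc i \<and> y = x[i := False, Suc i := True]
                          then 1 else 0)"

definition tasep_stationary :: "nat \<Rightarrow> real \<Rightarrow> real \<Rightarrow> (bool list \<Rightarrow> real) \<Rightarrow> bool" where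
  "tasep_stationary n \<alpha> \<beta> \<pi> \<longleftrightarrow>
     (\<forall>x\<in>tasep_states n. \<pi> x \<ge> 0) \<and>
     (\<Sum>x\<in>tasep_states n. \<pi> x) = 1 \<and>
     (\<forall>x\<in>tasep_states n.
        (\<Sum>y\<in>tasep_states n - {x}. \<pi> y * tasep_rate \<alpha> \<beta> y x)
        = \<pi> x * (\<Sum>y\<in>tasep_states n - {x}. tasep_rate \<alpha> \<beta> x y))"

end

theory Submission
  imports Defs
begin


definition RD :: "(nat \<Rightarrow> nat \<Rightarrow> real) \<Rightarrow> nat \<Rightarrow> nat \<Rightarrow> real" where
  "RD c i j = (if j = 0 then 0 else c i (j - 1))"

definition RE :: "nat \<Rightarrow> (nat \<Rightarrow> nat \<Rightarrow> real) \<Rightarrow> nat \<Rightarrow> nat \<Rightarrow> real" where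
  "RE K c i j = (if j \<ge> 1 then (\<Sum>j'=j..K. c i j')
                 else if i \<ge> 1 then (\<Sum>j'\<le>K. c (i - 1) j') else 0)"

definition RX :: "nat \<Rightarrow> bool \<Rightarrow> (nat \<Rightarrow> nat \<Rightarrow> real) \<Rightarrow> nat \<Rightarrow> nat \<Rightarrow> real" where
  "RX K b c = (if b then RD c else RE K c)"

definition act :: "nat \<Rightarrow> bool list \<Rightarrow> (nat \<Rightarrow> nat \<Rightarrow> real) \<Rightarrow> nat \<Rightarrow> nat \<Rightarrow> real" where
  "act K v c = foldl (\<lambda>c b. RX K b c) c v"

definition delta0 :: "nat \<Rightarrow> nat \<Rightarrow> real" where
  "delta0 i j = (if i = 0 \<and> j = 0 then 1 else 0)"

definition rho :: "nat \<Rightarrow> bool list \<Rightarrow> nat \<Rightarrow> nat \<Rightarrow> real" where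
  "rho K x = act K x delta0"

definition val :: "nat \<Rightarrow> real \<Rightarrow> real \<Rightarrow> (nat \<Rightarrow> nat \<Rightarrow> real) \<Rightarrow> real" where
  "val K a b c = (\<Sum>i\<le>K. \<Sum>j\<le>K. c i j * a ^ i * b ^ j)"

definition mu :: "nat \<Rightarrow> real \<Rightarrow> real \<Rightarrow> bool list \<Rightarrow> real" where
  "mu K a b x = val K a b (rho K x)"

lemma act_append: "act K (u @ v) c = act K v (act K u c)"
  by (simp add: act_def)

lemma act_snoc: "act K (u @ [b]) c = RX K b (act K u c)"
  by (simp add: act_def)

lemma rho_snoc: "rho K (u @ [b]) = RX K b (rho K u)"
  by (simp add: rho_def act_snoc)

lemma rho_Nil: "rho K [] = delta0"
  by (simp add: rho_def act_def)

lemma RX_add: "RX K b (\<lambda>i j. c i j + d i j) = (\<lambda>i j. RX K b c i j + RX K b d i j)"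
  by (auto simp: RX_def RD_def RE_def sum.distrib fun_eq_iff)

lemma act_add: "act K v (\<lambda>i j. c i j + d i j) = (\<lambda>i j. act K v c i j + act K v d i j)"
proof (induction v arbitrary: c d rule: rev_induct)
  case Nil then show ?case by (simp add: act_def)
next
  case (snoc b v) then show ?case by (simp add: act_snoc RX_add)
qed

lemma rho_support:
  "length x < i \<Longrightarrow> rho K x i j = 0" "length x < j \<Longrightarrow> rho K x i j = 0"
proof (induction x arbitrary: i j rule: rev_induct)
  case Nil
  { case 1 then show ?case by (simp add: rho_Nil delta0_def) }
  { case 2 then show ?case by (simp add: rho_Nil delta0_def) }
next
  case (snoc b x)
  { case 1 then show ?case using snoc.IH
      by (auto simp: rho_snoc RX_def RD_def RE_def intro!: sum.neutral) }
  { case 2 then show ?case using snoc.IH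
      by (auto simp: rho_snoc RX_def RD_def RE_def intro!: sum.neutral) }
qed


lemma shift_sum:
  fixes f :: "nat \<Rightarrow> real"
  assumes "\<And>t. K \<le> t \<Longrightarrow> f t = 0" "j \<ge> 1"
  shows "(\<Sum>j'=j..K. f (j' - 1)) = f (j - 1) + (\<Sum>j'=j..K. f j')"
proof -
  obtain j0 where j: "j = Suc j0" using assms(2) by (cases j) auto
  show ?thesis
  proof (cases K)
    case 0 then show ?thesis using assms j by simp
  next
    case (Suc K0)
    have "(\<Sum>j'=j..K. f (j' - 1)) = (\<Sum>t=j0..K0. f t)"
      using sum.atLeast_Suc_atMost_Suc_shift[of "\<lambda>t. f (t - 1)" j0 K0] j Suc by simp
    also have "\<dots> = (\<Sum>t=j0..K. f t)"
      using Suc assms(1)[of K] by (cases "j0 \<le> K") (auto simp: sum.nat_ivl_Suc')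
    also have "\<dots> = f j0 + (\<Sum>t=j..K. f t)"
      using j assms(1)[of j0] by (cases "j0 \<le> K") (auto simp: sum.atLeast_Suc_atMost)
    finally show ?thesis using j by simp
  qed
qed

lemma shift_sum0:
  fixes g :: "nat \<Rightarrow> real"
  assumes "g K = 0"
  shows "(\<Sum>j\<le>K. (if j = 0 then 0 else g (j - 1))) = (\<Sum>j\<le>K. g j)"
proof (cases K)
  case 0 then show ?thesis using assms by simp
next
  case (Suc K0)
  have "(\<Sum>j\<le>K. (if j = 0 then 0 else g (j - 1))) = (\<Sum>j\<le>K0. g j)"
    unfolding Suc sum.atMost_Suc_shift by simp
  also have "\<dots> = (\<Sum>j\<le>K. g j)" using assms Suc by simp
  finally show ?thesis .
qed

lemma key_identity:
  assumes "\<And>i t. K \<le> t \<Longrightarrow> c i t = 0"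
  shows "RE K (RD c) = (\<lambda>i j. RD c i j + RE K c i j)"
proof (intro ext)
  fix i j
  show "RE K (RD c) i j = RD c i j + RE K c i j"
  proof (cases "j \<ge> 1")
    case True
    have "(\<Sum>j'=j..K. RD c i j') = (\<Sum>j'=j..K. c i (j' - 1))"
      using True by (intro sum.cong) (auto simp: RD_def)
    also have "\<dots> = c i (j - 1) + (\<Sum>j'=j..K. c i j')"
      by (rule shift_sum) (use assms True in auto)
    finally show ?thesis using True by (simp add: RE_def RD_def)
  next
    case False
    then have j: "j = 0" by simp
    show ?thesis
    proof (cases "i \<ge> 1")
      case True
      have "(\<Sum>j'\<le>K. RD c (i - 1) j') = (\<Sum>j'\<le>K. (if j' = 0 then 0 else c (i - 1) (j' - 1)))"
        unfolding RD_def by (rule refl)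
      also have "\<dots> = (\<Sum>j'\<le>K. c (i - 1) j')"
        by (rule shift_sum0) (use assms in auto)
      finally show ?thesis using True j by (simp add: RE_def RD_def)
    qed (use j in \<open>simp add: RE_def RD_def\<close>)
  qed
qed

definition shiftE :: "(nat \<Rightarrow> nat \<Rightarrow> real) \<Rightarrow> nat \<Rightarrow> nat \<Rightarrow> real" where
  "shiftE c i j = (if i = 0 then 0 else c (i - 1) j)"

lemma RE_shift: "RE K (shiftE c) i j = shiftE (RE K c) i j"
proof (cases "j \<ge> 1")
  case True then show ?thesis by (auto simp: RE_def shiftE_def)
next
  case False
  then show ?thesis
  proof (cases "i \<ge> 2")
    case True
    then have "i \<noteq> 0" "i - 1 \<noteq> 0" "i - 1 - 1 = i - 2" by auto
    then show ?thesis using False True by (simp add: RE_def shiftE_def)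
  next
    case False2: False
    then have "i = 0 \<or> i = 1" by auto
    then show ?thesis using False by (auto simp: RE_def shiftE_def)
  qed
qed

lemma RX_shift: "RX K b (shiftE c) = shiftE (RX K b c)"
  by (auto simp: RX_def RD_def shiftE_def fun_eq_iff RE_shift)

lemma act_shift: "act K v (shiftE c) = shiftE (act K v c)"
proof (induction v rule: rev_induct)
  case Nil then show ?case by (simp add: act_def)
next
  case (snoc b v) then show ?case by (simp add: act_snoc RX_shift)
qed

lemma RE_delta0: "RE K delta0 = shiftE delta0"
  by (auto simp: RE_def shiftE_def delta0_def fun_eq_iff intro!: sum.neutral)

lemma rho_Cons_False: "rho K (False # v) = shiftE (rho K v)"
proof -
  have "rho K (False # v) = act K v (RE K delta0)"
    using act_append[of K "[False]" v delta0] by (simp add: rho_def act_def RX_def)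
  then show ?thesis by (simp add: RE_delta0 act_shift rho_def)
qed

lemma val_add: "val K a b (\<lambda>i j. c i j + d i j) = val K a b c + val K a b d"
  by (simp add: val_def algebra_simps sum.distrib)

lemma val_RD:
  assumes "\<And>i. c i K = 0"
  shows "val K a b (RD c) = b * val K a b c"
proof -
  have "val K a b (RD c) = (\<Sum>i\<le>K. \<Sum>j\<le>K. (if j = 0 then 0 else c i (j - 1) * a ^ i * b ^ (j - 1) * b))"
    unfolding val_def RD_def
    by (intro sum.cong refl) (auto simp: power_eq_if)
  also have "\<dots> = (\<Sum>i\<le>K. \<Sum>j\<le>K. c i j * a ^ i * b ^ j * b)"
    by (intro sum.cong refl shift_sum0) (use assms in auto)
  also have "\<dots> = b * val K a b c"
    by (simp add: val_def sum_distrib_left algebra_simps)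
  finally show ?thesis .
qed

lemma val_shiftE:
  assumes "\<And>j. c K j = 0"
  shows "val K a b (shiftE c) = a * val K a b c"
proof -
  have "val K a b (shiftE c) = (\<Sum>i\<le>K. (if i = 0 then 0 else (\<Sum>j\<le>K. c (i - 1) j * a ^ (i - 1) * b ^ j * a)))"
    unfolding val_def shiftE_def
    by (intro sum.cong refl) (auto simp: power_eq_if sum_distrib_right algebra_simps)
  also have "\<dots> = (\<Sum>i\<le>K. (\<Sum>j\<le>K. c i j * a ^ i * b ^ j * a))"
    by (intro shift_sum0) (use assms in auto)
  also have "\<dots> = a * val K a b c"
    by (simp add: val_def sum_distrib_left algebra_simps)
  finally show ?thesis .
qed

lemma mu_D:
  assumes "length u < K"
  shows "mu K a b (u @ [True]) = b * mu K a b u"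
  unfolding mu_def rho_snoc RX_def
  by (simp add: val_RD rho_support assms)

lemma mu_E:
  assumes "length v < K"
  shows "mu K a b (False # v) = a * mu K a b v"
  unfolding mu_def rho_Cons_False
  by (simp add: val_shiftE rho_support assms)

lemma mu_DE:
  assumes "length u < K"
  shows "mu K a b (u @ [True, False] @ v) = mu K a b (u @ [True] @ v) + mu K a b (u @ [False] @ v)"
proof -
  have sup: "\<And>i t. K \<le> t \<Longrightarrow> rho K u i t = 0" using assms by (intro rho_support) auto
  have "rho K (u @ [True, False] @ v) = act K v (RE K (RD (rho K u)))"
    by (simp add: rho_def act_append[symmetric]) (simp add: act_def RX_def)
  also have "\<dots> = (\<lambda>i j. act K v (RD (rho K u)) i j + act K v (RE K (rho K u)) i j)"
    by (simp add: key_identity[OF sup] act_add)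
  finally have "rho K (u @ [True, False] @ v) = \<dots>" .
  moreover have "rho K (u @ [True] @ v) = act K v (RD (rho K u))"
    by (simp add: rho_def act_append[symmetric]) (simp add: act_def RX_def)
  moreover have "rho K (u @ [False] @ v) = act K v (RE K (rho K u))"
    by (simp add: rho_def act_append[symmetric]) (simp add: act_def RX_def)
  ultimately show ?thesis by (simp add: mu_def val_add)
qed



lemma finite_states: "finite (tasep_states n)"
proof -
  have "tasep_states n = {xs. set xs \<subseteq> (UNIV::bool set) \<and> length xs = n}"
    by (auto simp: tasep_states_def)
  then show ?thesis using finite_lists_length_eq[of "UNIV::bool set" n] by simp
qed

lemma find_DE: "x \<noteq> [] \<Longrightarrow> x ! 0 \<Longrightarrow> \<not> last x \<Longrightarrow> \<exists>u v. x = u @ [True, False] @ v"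
proof (induction x)
  case Nil then show ?case by simp
next
  case (Cons b y)
  then have b: b by simp
  have yne: "y \<noteq> []" using Cons b by auto
  show ?case
  proof (cases "y ! 0")
    case False
    then have "y = False # tl y" using yne by (cases y) auto
    then show ?thesis using b by (intro exI[of _ "[]"] exI[of _ "tl y"]) simp
  next
    case True
    then obtain u v where "y = u @ [True, False] @ v" using Cons.IH yne Cons.prems by auto
    then show ?thesis using b by (intro exI[of _ "True # u"] exI[of _ v]) simp
  qed
qed

lemma val_delta0: "val K a b delta0 = 1"
proof -
  have "\<And>i. (\<Sum>j\<le>K. delta0 i j * a ^ i * b ^ j) = (\<Sum>j\<le>K. if j = 0 then (if i = 0 then 1 else 0) else 0)"
    by (intro sum.cong) (auto simp: delta0_def)
  then have "\<And>i. (\<Sum>j\<le>K. delta0 i j * a ^ i * b ^ j) = (if i = 0 then 1 else 0)"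
    by (simp add: sum.delta)
  then show ?thesis by (simp add: val_def sum.delta)
qed

lemma mu_pos:
  assumes "a > 0" "b > 0"
  shows "length x \<le> K \<Longrightarrow> mu K a b x > 0"
proof (induction "length x" arbitrary: x rule: less_induct)
  case less
  show ?case
  proof (cases x)
    case Nil then show ?thesis by (simp add: mu_def rho_Nil val_delta0)
  next
    case (Cons p v)
    show ?thesis
    proof (cases p)
      case False
      then show ?thesis using Cons less assms by (simp add: mu_E)
    next
      case True
      show ?thesis
      proof (cases "last x")
        case True
        then obtain u where u: "x = u @ [True]" using \<open>x = p # v\<close>
          by (metis append_butlast_last_id list.distinct(1))
        then show ?thesis using less assms by (simp add: mu_D)
      next
        case False
        then obtain u v where x: "x = u @ [True, False] @ v"
          using find_DE[of x] Cons \<open>p\<close> by auto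
        have "length u < K" using less x by simp
        moreover have "mu K a b (u @ [True] @ v) > 0" "mu K a b (u @ [False] @ v) > 0"
          using less x by auto
        ultimately show ?thesis using mu_DE[of u K a b v] x by simp
      qed
    qed
  qed
qed

lemma sum_single:
  fixes f :: "'a \<Rightarrow> real"
  assumes "finite A" "\<And>y. y \<in> A \<Longrightarrow> P y = (Q \<and> y = c)" "Q \<Longrightarrow> c \<in> A"
  shows "(\<Sum>y\<in>A. f y * (if P y then r else 0)) = (if Q then f c * r else 0)"
proof -
  have "(\<Sum>y\<in>A. f y * (if P y then r else 0)) = (\<Sum>y\<in>A. if y = c then (if Q then f y * r else 0) else 0)"
    using assms(2) by (intro sum.cong) auto
  also have "\<dots> = (if Q then f c * r else 0)"
    using assms(1,3) by (auto simp: sum.delta)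
  finally show ?thesis .
qed

lemma sum_single1:
  fixes r :: real
  assumes "finite A" "\<And>y. y \<in> A \<Longrightarrow> P y = (Q \<and> y = c)" "Q \<Longrightarrow> c \<in> A"
  shows "(\<Sum>y\<in>A. (if P y then r else 0)) = (if Q then r else 0)"
  using sum_single[of A P Q c "\<lambda>_. 1" r] assms by simp



lemma sum_single2:
  fixes r :: real
  assumes "finite A" "Q \<Longrightarrow> c \<in> A"
  shows "(\<Sum>y\<in>A. (if Q \<and> y = c then r else 0)) = (if Q then r else 0)"
  using assms by (cases Q) (auto simp: sum.delta')

lemma upd_same: "y ! i = b \<Longrightarrow> y[i := b] = y"
  by (metis list_update_id)
lemma e1: "length y = n \<Longrightarrow> length x = n \<Longrightarrow> n \<ge> 1 \<Longrightarrow> (\<not> y ! 0 \<and> x = y[0 := True]) = (x ! 0 \<and> y = x[0 := False])"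
proof
  assume "length y = n" "n \<ge> 1" "\<not> y ! 0 \<and> x = y[0 := True]"
  then show "x ! 0 \<and> y = x[0 := False]" by (auto simp: list_update_overwrite upd_same)
next
  assume "length x = n" "n \<ge> 1" "x ! 0 \<and> y = x[0 := False]"
  then show "\<not> y ! 0 \<and> x = y[0 := True]" by (auto simp: list_update_overwrite upd_same)
qed
lemma e2: "length y = n \<Longrightarrow> length x = n \<Longrightarrow> n \<ge> 1 \<Longrightarrow> (y ! (n - 1) \<and> x = y[n - 1 := False]) = (\<not> x ! (n - 1) \<and> y = x[n - 1 := True])"
proof
  assume "length y = n" "n \<ge> 1" "y ! (n - 1) \<and> x = y[n - 1 := False]"
  then show "\<not> x ! (n - 1) \<and> y = x[n - 1 := True]" by (auto simp: list_update_overwrite upd_same)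
next
  assume "length x = n" "n \<ge> 1" "\<not> x ! (n - 1) \<and> y = x[n - 1 := True]"
  then show "y ! (n - 1) \<and> x = y[n - 1 := False]" by (auto simp: list_update_overwrite upd_same)
qed
lemma upd4: "Suc i < length y \<Longrightarrow> y ! i = b \<Longrightarrow> y ! Suc i = c \<Longrightarrow> y[i := b', Suc i := c', i := b, Suc i := c] = y"
proof -
  assume a: "Suc i < length y" "y ! i = b" "y ! Suc i = c"
  have "y[i := b', Suc i := c', i := b] = y[i := b', i := b, Suc i := c']"
    by (rule list_update_swap) simp
  then have "y[i := b', Suc i := c', i := b, Suc i := c] = y[i := b, Suc i := c]"
    by (simp add: list_update_overwrite)
  also have "\<dots> = y" using a by (simp add: upd_same)
  finally show ?thesis .
qed
lemma e3: "length y = n \<Longrightarrow> length x = n \<Longrightarrow> i < n - 1 \<Longrightarrow> (y ! i \<and> \<not> y ! Suc i \<and> x = y[i := False, Suc i := True]) =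
          (\<not> x ! i \<and> x ! Suc i \<and> y = x[i := True, Suc i := False])"
proof
  assume "length y = n" "i < n - 1" "y ! i \<and> \<not> y ! Suc i \<and> x = y[i := False, Suc i := True]"
  then show "\<not> x ! i \<and> x ! Suc i \<and> y = x[i := True, Suc i := False]" by (auto simp: nth_list_update upd4)
next
  assume "length x = n" "i < n - 1" "\<not> x ! i \<and> x ! Suc i \<and> y = x[i := True, Suc i := False]"
  then show "y ! i \<and> \<not> y ! Suc i \<and> x = y[i := False, Suc i := True]" by (auto simp: nth_list_update upd4)
qed
lemma upd_neq: "i < length x \<Longrightarrow> x ! i \<noteq> b \<Longrightarrow> x[i := b] \<noteq> x"
  by (metis nth_list_update_eq)
lemma upd2_neq: "Suc i < length x \<Longrightarrow> x ! i \<noteq> b \<Longrightarrow> x[i := b, Suc i := c] \<noteq> x"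
proof
  assume "Suc i < length x" "x ! i \<noteq> b" "x[i := b, Suc i := c] = x"
  then have "x[i := b, Suc i := c] ! i = x ! i" by simp
  then show False using \<open>Suc i < length x\<close> \<open>x ! i \<noteq> b\<close> by (simp add: nth_list_update)
qed
lemma mem1: "x \<in> tasep_states n \<Longrightarrow> i < n \<Longrightarrow> x ! i \<noteq> b \<Longrightarrow> x[i := b] \<in> tasep_states n - {x}"
  using upd_neq[of i x b] by (simp add: tasep_states_def)
lemma mem2: "x \<in> tasep_states n \<Longrightarrow> i < n - 1 \<Longrightarrow> x ! i \<noteq> b \<Longrightarrow> x[i := b, Suc i := c] \<in> tasep_states n - {x}"
  using upd2_neq[of i x b c] by (simp add: tasep_states_def)

lemma in_sum:
  fixes w :: "bool list \<Rightarrow> real"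
  assumes n: "n \<ge> 1" and x: "x \<in> tasep_states n"
  shows "(\<Sum>y\<in>tasep_states n - {x}. w y * tasep_rate \<alpha> \<beta> y x)
    = (if x ! 0 then w (x[0 := False]) * \<alpha> else 0)
    + (if \<not> x ! (n - 1) then w (x[n - 1 := True]) * \<beta> else 0)
    + (\<Sum>i<n - 1. if \<not> x ! i \<and> x ! Suc i then w (x[i := True, Suc i := False]) * 1 else 0)"
proof -
  define A where "A = tasep_states n - {x}"
  have fA: "finite A" using finite_states by (simp add: A_def)
  have lx: "length x = n" using x by (simp add: tasep_states_def)
  have lA: "\<And>y. y \<in> A \<Longrightarrow> length y = n" by (simp add: A_def tasep_states_def)
  have "(\<Sum>y\<in>A. w y * tasep_rate \<alpha> \<beta> y x)
      = (\<Sum>y\<in>A. w y * (if \<not> y ! 0 \<and> x = y[0 := True] then \<alpha> else 0)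
             + w y * (if y ! (n - 1) \<and> x = y[n - 1 := False] then \<beta> else 0)
             + (\<Sum>i<n - 1. w y * (if y ! i \<and> \<not> y ! Suc i \<and> x = y[i := False, Suc i := True] then 1 else 0)))"
    by (intro sum.cong refl) (simp add: tasep_rate_def lA distrib_left sum_distrib_left)
  also have "\<dots> = (\<Sum>y\<in>A. w y * (if \<not> y ! 0 \<and> x = y[0 := True] then \<alpha> else 0))
      + (\<Sum>y\<in>A. w y * (if y ! (n - 1) \<and> x = y[n - 1 := False] then \<beta> else 0))
      + (\<Sum>i<n - 1. \<Sum>y\<in>A. w y * (if y ! i \<and> \<not> y ! Suc i \<and> x = y[i := False, Suc i := True] then 1 else 0))"
    unfolding sum.distrib by (subst (2) sum.swap) (rule refl)
  also have "(\<Sum>y\<in>A. w y * (if \<not> y ! 0 \<and> x = y[0 := True] then \<alpha> else 0))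
      = (if x ! 0 then w (x[0 := False]) * \<alpha> else 0)"
  proof (rule sum_single[OF fA])
    fix y assume y: "y \<in> A"
    then have ly: "length y = n" "y \<noteq> x" by (auto simp: lA A_def)
    show "(\<not> y ! 0 \<and> x = y[0 := True]) = (x ! 0 \<and> y = x[0 := False])"
      by (rule e1[OF ly(1) lx n])
  next
    assume "x ! 0"
    then show "x[0 := False] \<in> A" using x n unfolding A_def by (intro mem1) auto
  qed
  also have "(\<Sum>y\<in>A. w y * (if y ! (n - 1) \<and> x = y[n - 1 := False] then \<beta> else 0))
      = (if \<not> x ! (n - 1) then w (x[n - 1 := True]) * \<beta> else 0)"
  proof (rule sum_single[OF fA])
    fix y assume y: "y \<in> A"
    then have ly: "length y = n" "y \<noteq> x" by (auto simp: lA A_def)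
    show "(y ! (n - 1) \<and> x = y[n - 1 := False]) = (\<not> x ! (n - 1) \<and> y = x[n - 1 := True])"
      by (rule e2[OF ly(1) lx n])
  next
    assume "\<not> x ! (n - 1)"
    then show "x[n - 1 := True] \<in> A" using x n unfolding A_def by (intro mem1) auto
  qed
  also have "(\<Sum>i<n - 1. \<Sum>y\<in>A. w y * (if y ! i \<and> \<not> y ! Suc i \<and> x = y[i := False, Suc i := True] then 1 else 0))
      = (\<Sum>i<n - 1. if \<not> x ! i \<and> x ! Suc i then w (x[i := True, Suc i := False]) * 1 else 0)"
  proof (intro sum.cong refl)
    fix i assume i: "i \<in> {..<n - 1}"
    show "(\<Sum>y\<in>A. w y * (if y ! i \<and> \<not> y ! Suc i \<and> x = y[i := False, Suc i := True] then 1 else 0))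
      = (if \<not> x ! i \<and> x ! Suc i then w (x[i := True, Suc i := False]) * 1 else 0)"
    proof (rule sum_single[OF fA, of "\<lambda>y. y ! i \<and> \<not> y ! Suc i \<and> x = y[i := False, Suc i := True]"
         "\<not> x ! i \<and> x ! Suc i" "x[i := True, Suc i := False]"])
      fix y assume y: "y \<in> A"
      then have ly: "length y = n" "y \<noteq> x" by (auto simp: lA A_def)
      show "(y ! i \<and> \<not> y ! Suc i \<and> x = y[i := False, Suc i := True]) =
            ((\<not> x ! i \<and> x ! Suc i) \<and> y = x[i := True, Suc i := False])"
        using e3[OF ly(1) lx, of i] i by auto
    next
      assume "\<not> x ! i \<and> x ! Suc i"
      then show "x[i := True, Suc i := False] \<in> A" using x i unfolding A_def by (intro mem2) auto
    qed
  qed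
  finally show ?thesis by (simp add: A_def)
qed

lemma out_sum:
  assumes n: "n \<ge> 1" and x: "x \<in> tasep_states n"
  shows "(\<Sum>y\<in>tasep_states n - {x}. tasep_rate \<alpha> \<beta> x y)
    = (if \<not> x ! 0 then \<alpha> else 0)
    + (if x ! (n - 1) then \<beta> else 0)
    + (\<Sum>i<n - 1. if x ! i \<and> \<not> x ! Suc i then 1 else 0)"
proof -
  define A where "A = tasep_states n - {x}"
  have fA: "finite A" using finite_states by (simp add: A_def)
  have lx: "length x = n" using x by (simp add: tasep_states_def)
  have "(\<Sum>y\<in>A. tasep_rate \<alpha> \<beta> x y)
      = (\<Sum>y\<in>A. (if \<not> x ! 0 \<and> y = x[0 := True] then \<alpha> else 0))
      + (\<Sum>y\<in>A. (if x ! (n - 1) \<and> y = x[n - 1 := False] then \<beta> else 0))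
      + (\<Sum>i<n - 1. \<Sum>y\<in>A. (if x ! i \<and> \<not> x ! Suc i \<and> y = x[i := False, Suc i := True] then 1 else 0))"
    unfolding tasep_rate_def lx sum.distrib by (subst (2) sum.swap) (rule refl)
  also have "(\<Sum>y\<in>A. (if \<not> x ! 0 \<and> y = x[0 := True] then \<alpha> else 0)) = (if \<not> x ! 0 then \<alpha> else 0)"
    by (rule sum_single1[OF fA], rule refl) (use x n in \<open>unfold A_def, intro mem1, auto\<close>)
  also have "(\<Sum>y\<in>A. (if x ! (n - 1) \<and> y = x[n - 1 := False] then \<beta> else 0)) = (if x ! (n - 1) then \<beta> else 0)"
    by (rule sum_single1[OF fA], rule refl) (use x n in \<open>unfold A_def, intro mem1, auto\<close>)
  also have "(\<Sum>i<n - 1. \<Sum>y\<in>A. (if x ! i \<and> \<not> x ! Suc i \<and> y = x[i := False, Suc i := True] then 1 else 0))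
      = (\<Sum>i<n - 1. if x ! i \<and> \<not> x ! Suc i then 1 else (0::real))"
  proof (intro sum.cong refl)
    fix i assume i: "i \<in> {..<n - 1}"
    show "(\<Sum>y\<in>A. (if x ! i \<and> \<not> x ! Suc i \<and> y = x[i := False, Suc i := True] then 1 else 0))
      = (if x ! i \<and> \<not> x ! Suc i then 1 else (0::real))"
      unfolding conj_assoc[symmetric]
      by (rule sum_single2[OF fA]) (use x i in \<open>unfold A_def, intro mem2, auto\<close>)
  qed
  finally show ?thesis by (simp add: A_def)
qed



definition sg :: "bool \<Rightarrow> real" where "sg b = (if b then -1 else 1)"
definition del :: "nat \<Rightarrow> bool list \<Rightarrow> bool list" where "del i x = take i x @ drop (Suc i) x"

lemma split2: "Suc i < length x \<Longrightarrow> x = take i x @ x ! i # x ! Suc i # drop (Suc (Suc i)) x"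
  by (metis Cons_nth_drop_Suc Suc_lessD append_take_drop_id)

context
  fixes n :: nat and \<alpha> \<beta> :: real
  assumes n: "n \<ge> 1" and a: "\<alpha> > 0" and b: "\<beta> > 0"
begin

abbreviation "M \<equiv> mu n (1 / \<alpha>) (1 / \<beta>)"
definition "g i x = sg (x ! i) * M (del i x)"

lemma bond:
  assumes lx: "length x = n" and i: "Suc i < n"
  shows "(if \<not> x ! i \<and> x ! Suc i then M (x[i := True, Suc i := False]) * 1 else 0)
       - M x * (if x ! i \<and> \<not> x ! Suc i then 1 else 0) = g i x - g (Suc i) x"
proof -
  define u where "u = take i x"
  define v where "v = drop (Suc (Suc i)) x"
  define p where "p = x ! i"
  define q where "q = x ! Suc i"
  have x: "x = u @ p # q # v" unfolding u_def v_def p_def q_def by (rule split2) (simp add: lx i)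
  have lu: "length u = i" using lx i by (simp add: u_def)
  have lun: "length u < n" using lu i by simp
  have d1: "del i x = u @ [q] @ v" using lu by (simp add: x del_def)
  have d2: "del (Suc i) x = u @ [p] @ v" using lu by (simp add: x del_def)
  have up: "x[i := True, Suc i := False] = u @ [True, False] @ v" using lu by (simp add: x list_update_append)
  have DE: "M (u @ [True, False] @ v) = M (u @ [True] @ v) + M (u @ [False] @ v)"
    by (rule mu_DE[OF lun])
  have pi: "x ! i = p" "x ! Suc i = q" by (simp_all add: p_def q_def)
  show ?thesis
    unfolding g_def d1 d2 pi up
    using DE by (cases p; cases q) (auto simp: sg_def x)
qed

lemma left_bd:
  assumes lx: "length x = n"
  shows "(if x ! 0 then M (x[0 := False]) * \<alpha> else 0) - M x * (if \<not> x ! 0 then \<alpha> else 0) = - g 0 x"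
proof -
  obtain p v where x: "x = p # v" using lx n by (cases x) auto
  have lv: "length v < n" using lx x by simp
  have E: "M (False # v) = (1 / \<alpha>) * M v" by (rule mu_E[OF lv])
  show ?thesis using E a by (cases p) (auto simp: g_def sg_def del_def x)
qed

lemma right_bd:
  assumes lx: "length x = n"
  shows "(if \<not> x ! (n - 1) then M (x[n - 1 := True]) * \<beta> else 0) - M x * (if x ! (n - 1) then \<beta> else 0) = g (n - 1) x"
proof -
  obtain u p where x: "x = u @ [p]" using lx n by (metis append_butlast_last_id list.size(3) not_one_le_zero)
  have lu: "length u = n - 1" using lx x by simp
  have lun: "length u < n" using lu n by simp
  have D: "M (u @ [True]) = (1 / \<beta>) * M u" by (rule mu_D[OF lun])
  have xn: "x ! (n - 1) = p" using lu x by (simp add: nth_append)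
  have upd: "x[n - 1 := True] = u @ [True]" using lu x by (simp add: list_update_append)
  have dl: "del (n - 1) x = u" using lu x by (simp add: del_def)
  show ?thesis unfolding xn upd g_def dl using D b by (cases p) (auto simp: sg_def x)
qed

lemma balance:
  assumes x: "x \<in> tasep_states n"
  shows "(\<Sum>y\<in>tasep_states n - {x}. M y * tasep_rate \<alpha> \<beta> y x)
         = M x * (\<Sum>y\<in>tasep_states n - {x}. tasep_rate \<alpha> \<beta> x y)"
proof -
  have lx: "length x = n" using x by (simp add: tasep_states_def)
  have "(\<Sum>y\<in>tasep_states n - {x}. M y * tasep_rate \<alpha> \<beta> y x)
         - M x * (\<Sum>y\<in>tasep_states n - {x}. tasep_rate \<alpha> \<beta> x y)
       = ((if x ! 0 then M (x[0 := False]) * \<alpha> else 0) - M x * (if \<not> x ! 0 then \<alpha> else 0))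
       + ((if \<not> x ! (n - 1) then M (x[n - 1 := True]) * \<beta> else 0) - M x * (if x ! (n - 1) then \<beta> else 0))
       + (\<Sum>i<n - 1. (if \<not> x ! i \<and> x ! Suc i then M (x[i := True, Suc i := False]) * 1 else 0)
            - M x * (if x ! i \<and> \<not> x ! Suc i then 1 else 0))"
    unfolding in_sum[OF n x] out_sum[OF n x]
    by (simp add: algebra_simps sum_subtractf sum_distrib_left)
  also have "\<dots> = - g 0 x + g (n - 1) x + (\<Sum>i<n - 1. g i x - g (Suc i) x)"
    using left_bd[OF lx] right_bd[OF lx] bond[OF lx] by (simp add: less_diff_conv)
  also have "\<dots> = 0"
    using sum_lessThan_telescope'[of "\<lambda>i. g i x" "n - 1"] by simp
  finally show ?thesis by simp
qed

end


context
  fixes n :: nat and \<alpha> \<beta> :: real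
  assumes n: "n \<ge> 1" and a: "\<alpha> > 0" and b: "\<beta> > 0"
begin

lemma rate_nonneg: "tasep_rate \<alpha> \<beta> x y \<ge> 0"
  using a b by (auto simp: tasep_rate_def intro!: add_nonneg_nonneg sum_nonneg)

definition "stp y z \<longleftrightarrow> y \<in> tasep_states n \<and> z \<in> tasep_states n \<and> y \<noteq> z \<and> tasep_rate \<alpha> \<beta> y z > 0"

lemma stp_entry:
  assumes "length x = n" "\<not> x ! 0"
  shows "stp x (x[0 := True])"
proof -
  have "tasep_rate \<alpha> \<beta> x (x[0 := True]) \<ge> \<alpha>"
    using assms a b by (auto simp: tasep_rate_def intro!: add_nonneg_nonneg sum_nonneg)
  then show ?thesis using assms n a upd_neq[of 0 x True]
    by (auto simp: stp_def tasep_states_def)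
qed

lemma stp_exit:
  assumes "length x = n" "x ! (n - 1)"
  shows "stp x (x[n - 1 := False])"
proof -
  have "tasep_rate \<alpha> \<beta> x (x[n - 1 := False]) \<ge> \<beta>"
    using assms a b by (auto simp: tasep_rate_def intro!: add_nonneg_nonneg sum_nonneg)
  then show ?thesis using assms n b upd_neq[of "n - 1" x False]
    by (auto simp: stp_def tasep_states_def)
qed

lemma stp_hop:
  assumes lx: "length x = n" and i: "Suc i < n" and xi: "x ! i" "\<not> x ! Suc i"
  shows "stp x (x[i := False, Suc i := True])"
proof -
  let ?y = "x[i := False, Suc i := True]"
  have "(\<Sum>j<length x - 1. if x ! j \<and> \<not> x ! Suc j \<and> ?y = x[j := False, Suc j := True] then 1 else (0::real)) \<ge>
        (if x ! i \<and> \<not> x ! Suc i \<and> ?y = x[i := False, Suc i := True] then 1 else 0)"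
    by (rule member_le_sum) (use lx i in auto)
  then have "(\<Sum>j<length x - 1. if x ! j \<and> \<not> x ! Suc j \<and> ?y = x[j := False, Suc j := True] then 1 else (0::real)) \<ge> 1"
    using xi by simp
  then have "tasep_rate \<alpha> \<beta> x ?y \<ge> 1"
    unfolding tasep_rate_def using a b by (smt (verit))
  then show ?thesis using lx i xi upd2_neq[of i x False True]
    by (auto simp: stp_def tasep_states_def)
qed

abbreviation "R \<equiv> stp\<^sup>*\<^sup>*"

lemma hop_seq:
  "length (w @ True # replicate p False @ z) = n \<Longrightarrow>
   R (w @ True # replicate p False @ z) (w @ replicate p False @ True # z)"
proof (induction p arbitrary: w)
  case 0 then show ?case by simp
next
  case (Suc p)
  let ?x = "w @ True # False # replicate p False @ z"
  have lx: "length ?x = n" using Suc.prems by simp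
  have i: "Suc (length w) < n" using lx by simp
  have "?x[length w := False, Suc (length w) := True] = (w @ [False]) @ True # replicate p False @ z"
    by (simp add: list_update_append)
  then have s1: "stp ?x ((w @ [False]) @ True # replicate p False @ z)"
    using stp_hop[OF lx i] by (simp add: nth_append)
  have "R ((w @ [False]) @ True # replicate p False @ z) ((w @ [False]) @ replicate p False @ True # z)"
    by (rule Suc.IH) (use lx in simp)
  then show ?case using s1 by (simp add: replicate_app_Cons_same)
qed

lemma all_False: "True \<notin> set ys \<Longrightarrow> ys = replicate (length ys) False"
  by (induction ys) auto

lemma reach_zero:
  "x \<in> tasep_states n \<Longrightarrow> R x (replicate n False)"
proof (induction "length (filter id x)" arbitrary: x rule: less_induct)
  case less
  have lx: "length x = n" using less.prems by (simp add: tasep_states_def)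
  show ?case
  proof (cases "True \<in> set x")
    case False
    then show ?thesis using all_False[of x] lx by simp
  next
    case True
    then obtain w ys where x: "x = w @ True # ys" and ys: "True \<notin> set ys"
      using split_list_last by metis
    define p where "p = length ys"
    have ysr: "ys = replicate p False" using all_False[OF ys] by (simp add: p_def)
    have r1: "R x (w @ replicate p False @ [True])"
      using hop_seq[of w p "[]"] lx x ysr by simp
    let ?y = "w @ replicate p False @ [True]"
    have ly: "length ?y = n" using lx x ysr by simp
    have nl: "n - 1 = length (w @ replicate p False)" using ly by simp
    have "?y ! (n - 1)" unfolding nl by (simp del: length_append add: nth_append_length[of "w @ replicate p False" True "[]", simplified])
    then have s2: "stp ?y (?y[n - 1 := False])" using stp_exit[OF ly] by simp
    have y2: "?y[n - 1 := False] = w @ replicate (Suc p) False"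
      using ly by (simp add: list_update_append replicate_append_same[symmetric]) arith
    have "R (w @ replicate (Suc p) False) (replicate n False)"
      by (rule less.hyps) (use lx x ysr in \<open>auto simp: tasep_states_def\<close>)
    then show ?thesis using r1 s2 y2
      by (metis rtranclp.rtrancl_into_rtrancl converse_rtranclp_into_rtranclp rtranclp_trans)
  qed
qed

lemma zero_reach:
  "x \<in> tasep_states n \<Longrightarrow> R (replicate n False) x"
proof (induction "length (filter id x)" arbitrary: x rule: less_induct)
  case less
  have lx: "length x = n" using less.prems by (simp add: tasep_states_def)
  show ?case
  proof (cases "True \<in> set x")
    case False
    then show ?thesis using all_False[of x] lx by simp
  next
    case True
    then obtain ys w where x: "x = ys @ True # w" and ys: "True \<notin> set ys"
      using split_list_first by metis
    define p where "p = length ys"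
    have ysr: "ys = replicate p False" using all_False[OF ys] by (simp add: p_def)
    let ?y = "replicate (Suc p) False @ w"
    have ly: "length ?y = n" using lx x ysr by simp
    have r0: "R (replicate n False) ?y"
      by (rule less.hyps) (use lx x ysr in \<open>auto simp: tasep_states_def\<close>)
    have s1: "stp ?y (?y[0 := True])" using stp_entry[OF ly] by simp
    have y2: "?y[0 := True] = [] @ True # replicate p False @ w" by simp
    have r2: "R ([] @ True # replicate p False @ w) ([] @ replicate p False @ True # w)"
      by (rule hop_seq) (use ly in simp)
    show ?thesis using r0 s1 y2 r2 x ysr
      by (metis append_Nil rtranclp.rtrancl_into_rtrancl rtranclp_trans)
  qed
qed

lemma M_pos: "x \<in> tasep_states n \<Longrightarrow> M n \<alpha> \<beta> x > 0"
  using mu_pos[of "1/\<alpha>" "1/\<beta>" x n] a b by (simp add: tasep_states_def)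


lemma unique:
  assumes st: "tasep_stationary n \<alpha> \<beta> \<pi>" and x: "x \<in> tasep_states n"
  shows "\<pi> x = M n \<alpha> \<beta> x / (\<Sum>y\<in>tasep_states n. M n \<alpha> \<beta> y)"
proof -
  define S where "S = tasep_states n"
  define Mu where "Mu = M n \<alpha> \<beta>"
  define q where "q = tasep_rate \<alpha> \<beta>"
  define r where "r y = \<pi> y / Mu y" for y
  have fS: "finite S" by (simp add: S_def finite_states)
  have neS: "S \<noteq> {}" using x by (auto simp: S_def)
  have Mpos: "\<And>y. y \<in> S \<Longrightarrow> Mu y > 0" using M_pos by (simp add: S_def Mu_def)
  have piy: "\<pi> y = r y * Mu y" if "y \<in> S" for y using Mpos[OF that] by (simp add: r_def)
  have balpi: "\<And>x. x \<in> S \<Longrightarrow> (\<Sum>y\<in>S - {x}. \<pi> y * q y x) = \<pi> x * (\<Sum>y\<in>S - {x}. q x y)"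
    using st by (simp add: tasep_stationary_def S_def q_def)
  have balM: "\<And>x. x \<in> S \<Longrightarrow> (\<Sum>y\<in>S - {x}. Mu y * q y x) = Mu x * (\<Sum>y\<in>S - {x}. q x y)"
    using balance[OF n a b] by (simp add: S_def Mu_def q_def)
  define m where "m = Max (r ` S)"
  have mge: "\<And>y. y \<in> S \<Longrightarrow> r y \<le> m" using fS by (simp add: m_def)
  have "m \<in> r ` S" unfolding m_def using fS neS by (intro Max_in) auto
  then obtain x0 where x0: "x0 \<in> S" "r x0 = m" by auto
  have closure: "r y = m" if xS: "z \<in> S" and rz: "r z = m" and sy: "stp y z" for y z
  proof -
    have yS: "y \<in> S - {z}" using sy by (auto simp: stp_def S_def)
    have qyz: "q y z > 0" using sy by (simp add: stp_def q_def)
    have "(\<Sum>w\<in>S - {z}. Mu w * q w z * (m - r w))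
        = m * (\<Sum>w\<in>S - {z}. Mu w * q w z) - (\<Sum>w\<in>S - {z}. \<pi> w * q w z)"
      by (simp add: algebra_simps sum_subtractf sum_distrib_left piy)
    also have "\<dots> = 0" using balM[OF xS] balpi[OF xS] piy[OF xS] rz by simp
    finally have sum0: "(\<Sum>w\<in>S - {z}. Mu w * q w z * (m - r w)) = 0" .
    have nn: "\<forall>w\<in>S - {z}. Mu w * q w z * (m - r w) \<ge> 0"
    proof
      fix w assume "w \<in> S - {z}"
      then have "Mu w \<ge> 0" "q w z \<ge> 0" "m - r w \<ge> 0"
        using Mpos[of w] mge[of w] rate_nonneg by (auto simp: q_def)
      then show "Mu w * q w z * (m - r w) \<ge> 0" by simp
    qed
    have "Mu y * q y z * (m - r y) = 0"
    proof -
      have "\<forall>w\<in>S - {z}. Mu w * q w z * (m - r w) = 0"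
        using sum_nonneg_eq_0_iff[of "S - {z}" "\<lambda>w. Mu w * q w z * (m - r w)"] fS sum0 nn by auto
      then show ?thesis using yS by blast
    qed
    then show ?thesis using Mpos[of y] qyz yS by auto
  qed
  have allm: "r y = m" if yS: "y \<in> S" for y
  proof -
    have "R y x0" using reach_zero[of y] zero_reach[of x0] yS x0(1)
      by (auto simp: S_def intro: rtranclp_trans)
    then have "x0 \<in> S \<and> r x0 = m \<longrightarrow> y \<in> S \<and> r y = m"
    proof (induction rule: rtranclp_induct)
      case base then show ?case by simp
    next
      case (step z w)
      show ?case
      proof
        assume w: "w \<in> S \<and> r w = m"
        have "z \<in> S" using step.hyps(2) by (simp add: stp_def S_def)
        moreover have "r z = m" using closure[of w z] w step.hyps(2) by blast
        ultimately show "y \<in> S \<and> r y = m" using step.IH by blast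
      qed
    qed
    then show ?thesis using x0 by simp
  qed
  have "1 = (\<Sum>y\<in>S. \<pi> y)" using st by (simp add: tasep_stationary_def S_def)
  also have "\<dots> = m * (\<Sum>y\<in>S. Mu y)" by (simp add: sum_distrib_left piy allm)
  finally have m1: "m * (\<Sum>y\<in>S. Mu y) = 1" by simp
  have "\<pi> x = m * Mu x" using piy allm x by (simp add: S_def)
  moreover have sne: "(\<Sum>y\<in>S. Mu y) \<noteq> 0" using m1 by auto
  moreover have "m = 1 / (\<Sum>y\<in>S. Mu y)" using m1 sne by (simp add: eq_divide_eq)
  ultimately show ?thesis by (simp add: S_def Mu_def)
qed

end


definition mc :: "int \<Rightarrow> int \<Rightarrow> real" where "mc c p = ibinom (c + p - 1) p"

lemma mc_neg: "p < 0 \<Longrightarrow> mc c p = 0" by (simp add: mc_def ibinom_def)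
lemma mc_zero: "mc c 0 = 1" by (simp add: mc_def ibinom_def)

lemma ibinom_nat: "ibinom (int N) (int r) = real (N choose r)"
  by (simp add: ibinom_def binomial_gbinomial)

lemma mc_left0: "mc 0 q = (if q = 0 then 1 else 0)"
proof (cases "q > 0")
  case True
  define r where "r = nat (q - 1)"
  have r: "q = int (Suc r)" using True by (simp add: r_def)
  have "mc 0 q = ibinom (int r) (int (Suc r))" using r by (simp add: mc_def)
  also have "\<dots> = 0" by (simp only: ibinom_nat) simp
  finally show ?thesis using True by simp
qed (auto simp: mc_neg mc_zero)

lemma mc_pascal: "mc c p = mc (c - 1) p + mc c (p - 1)"
proof (cases "p \<ge> 1")
  case True
  define r where "r = nat (p - 1)"
  have np: "nat p = Suc r" "nat (p - 1) = r" using True by (simp_all add: r_def)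
  define a where "a = real_of_int (c + p - 2)"
  have e1: "real_of_int (c + p - 1) = a + 1" by (simp add: a_def)
  have "mc c p = (a + 1) gchoose Suc r" using True np e1 by (simp add: mc_def ibinom_def add.commute)
  also have "\<dots> = (a gchoose r) + (a gchoose Suc r)" by (rule gbinomial_Suc_Suc)
  also have "a gchoose Suc r = mc (c - 1) p" using True np by (simp add: mc_def ibinom_def a_def)
  also have "a gchoose r = mc c (p - 1)" using True np by (simp add: mc_def ibinom_def a_def)
  finally show ?thesis by simp
next
  case False
  then show ?thesis by (cases "p = 0") (auto simp: mc_neg mc_zero)
qed

lemma hockey: "(\<Sum>q\<le>Q. mc c (int q)) = mc (c + 1) (int Q)"
proof (induction Q)
  case 0 then show ?case by (simp add: mc_zero)
next
  case (Suc Q)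
  have "mc (c + 1) (int (Suc Q)) = mc c (int (Suc Q)) + mc (c + 1) (int Q)"
    using mc_pascal[of "c + 1" "int (Suc Q)"] by simp
  then show ?case using Suc by simp
qed

lemma hockey1: "(\<Sum>q\<le>Q. mc c (int q - 1)) = mc (c + 1) (int Q - 1)"
proof (induction Q)
  case 0 then show ?case by (simp add: mc_neg)
next
  case (Suc Q)
  have "mc (c + 1) (int (Suc Q) - 1) = mc c (int (Suc Q) - 1) + mc (c + 1) (int Q - 1)"
    using mc_pascal[of "c + 1" "int (Suc Q) - 1"] by simp
  then show ?case using Suc by simp
qed


definition Fz :: "nat \<Rightarrow> nat \<Rightarrow> int \<Rightarrow> int \<Rightarrow> real" where
  "Fz m k p q = ibinom (int k + p - 1) p * ibinom (int m + q - 1) q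
              - ibinom (int k + p - 1) (p - 1) * ibinom (int m + q - 1) (q - 1)"

lemma Fz_mc: "Fz m k p q = mc (int k) p * mc (int m) q - mc (int k + 1) (p - 1) * mc (int m + 1) (q - 1)"
  unfolding Fz_def mc_def by (simp add: algebra_simps)

lemma Fz_sum: "(\<Sum>q\<le>Q. Fz m k p (int q)) = mc (int k) p * mc (int m + 1) (int Q) - mc (int k + 1) (p - 1) * mc (int m + 2) (int Q - 1)"
proof -
  have "(\<Sum>q\<le>Q. Fz m k p (int q)) = mc (int k) p * (\<Sum>q\<le>Q. mc (int m) (int q)) - mc (int k + 1) (p - 1) * (\<Sum>q\<le>Q. mc (int m + 1) (int q - 1))"
    by (simp add: Fz_mc sum_subtractf sum_distrib_left)
  also have "\<dots> = mc (int k) p * mc (int m + 1) (int Q) - mc (int k + 1) (p - 1) * mc (int m + 2) (int Q - 1)"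
    by (simp add: hockey hockey1 add.assoc)
  finally show ?thesis .
qed

lemma Fz_negp: "p < 0 \<Longrightarrow> Fz m k p q = 0" by (simp add: Fz_mc mc_neg)
lemma Fz_negq: "q < 0 \<Longrightarrow> Fz m k p q = 0" by (simp add: Fz_mc mc_neg)

lemma Fz_m0: "p \<le> 0 \<Longrightarrow> Fz 0 k p q = (if p = 0 \<and> q = 0 then 1 else 0)"
  by (cases "p = 0") (auto simp: Fz_mc mc_neg mc_zero mc_left0)

lemma Fz_diag: "m \<ge> 1 \<Longrightarrow> k \<ge> 1 \<Longrightarrow> Fz m k (int m) (int k) = 0"
proof -
  assume m: "m \<ge> 1" and k: "k \<ge> 1"
  define N where "N = m + k - 1"
  have a1: "mc (int k) (int m) = real (N choose m)"
    using ibinom_nat[of N m] m k by (simp add: mc_def N_def of_nat_diff add.commute)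
  have a2: "mc (int m) (int k) = real (N choose k)"
    using ibinom_nat[of N k] m k by (simp add: mc_def N_def of_nat_diff add.commute)
  have a3: "mc (int k + 1) (int m - 1) = real (N choose (m - 1))"
    using ibinom_nat[of N "m - 1"] m k by (simp add: mc_def N_def of_nat_diff add.commute)
  have a4: "mc (int m + 1) (int k - 1) = real (N choose (k - 1))"
    using ibinom_nat[of N "k - 1"] m k by (simp add: mc_def N_def of_nat_diff add.commute)
  have s1: "N choose m = N choose (k - 1)" using binomial_symmetric[of m N] m k by (simp add: N_def)
  have s2: "N choose k = N choose (m - 1)" using binomial_symmetric[of k N] m k by (simp add: N_def)
  show ?thesis by (simp add: Fz_mc a1 a2 a3 a4 s1 s2)
qed



definition Wd :: "nat \<Rightarrow> nat \<Rightarrow> bool list set" where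
  "Wd m k = {x. length x = m + k \<and> length (filter id x) = k}"

definition Sc :: "nat \<Rightarrow> nat \<Rightarrow> nat \<Rightarrow> nat \<Rightarrow> nat \<Rightarrow> real" where
  "Sc K m k i j = (\<Sum>x\<in>Wd m k. rho K x i j)"

lemma finite_Wd: "finite (Wd m k)"
  by (rule finite_subset[OF _ finite_states[of "m + k"]]) (auto simp: Wd_def tasep_states_def)

lemma Wd_00: "Wd 0 0 = {[]}" by (auto simp: Wd_def)

lemma snocT_Wd: "x @ [True] \<in> Wd m k \<longleftrightarrow> k \<ge> 1 \<and> x \<in> Wd m (k - 1)"
  by (auto simp: Wd_def)
lemma snocF_Wd: "x @ [False] \<in> Wd m k \<longleftrightarrow> m \<ge> 1 \<and> x \<in> Wd (m - 1) k"
  using length_filter_le[of id x] by (auto simp: Wd_def simp del: length_filter_le)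

lemma Wd_decomp:
  assumes "m + k \<ge> 1"
  shows "Wd m k = (if k \<ge> 1 then (\<lambda>x. x @ [True]) ` Wd m (k - 1) else {})
               \<union> (if m \<ge> 1 then (\<lambda>x. x @ [False]) ` Wd (m - 1) k else {})"
proof (intro set_eqI iffI)
  fix x assume x: "x \<in> Wd m k"
  then have "x \<noteq> []" using assms by (auto simp: Wd_def)
  then obtain u c where u: "x = u @ [c]" by (metis rev_exhaust)
  show "x \<in> (if k \<ge> 1 then (\<lambda>x. x @ [True]) ` Wd m (k - 1) else {})
               \<union> (if m \<ge> 1 then (\<lambda>x. x @ [False]) ` Wd (m - 1) k else {})"
    using x snocT_Wd[of u m k] snocF_Wd[of u m k] u by (cases c) auto
next
  fix x assume "x \<in> (if k \<ge> 1 then (\<lambda>x. x @ [True]) ` Wd m (k - 1) else {})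
               \<union> (if m \<ge> 1 then (\<lambda>x. x @ [False]) ` Wd (m - 1) k else {})"
  then show "x \<in> Wd m k" using snocT_Wd snocF_Wd by (auto split: if_splits)
qed

lemma sum_RD: "(\<Sum>x\<in>A. RD (c x) i j) = RD (\<lambda>i j. \<Sum>x\<in>A. c x i j) i j"
  by (simp add: RD_def)

lemma sum_RE: "(\<Sum>x\<in>A. RE K (c x) i j) = RE K (\<lambda>i j. \<Sum>x\<in>A. c x i j) i j"
proof (cases "j \<ge> 1")
  case True
  then show ?thesis unfolding RE_def by simp (rule sum.swap)
next
  case False
  show ?thesis
  proof (cases "i \<ge> 1")
    case True
    then show ?thesis unfolding RE_def using False by simp (rule sum.swap)
  qed (use False in \<open>simp add: RE_def\<close>)
qed

lemma Sc_rec: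
  assumes "m + k \<ge> 1"
  shows "Sc K m k i j = (if k \<ge> 1 then RD (Sc K m (k - 1)) i j else 0)
                      + (if m \<ge> 1 then RE K (Sc K (m - 1) k) i j else 0)"
proof -
  let ?A = "if k \<ge> 1 then (\<lambda>x. x @ [True]) ` Wd m (k - 1) else {}"
  let ?B = "if m \<ge> 1 then (\<lambda>x. x @ [False]) ` Wd (m - 1) k else {}"
  have fA: "finite ?A" "finite ?B" using finite_Wd by auto
  have dis: "?A \<inter> ?B = {}" by auto
  have "Sc K m k i j = (\<Sum>x\<in>?A. rho K x i j) + (\<Sum>x\<in>?B. rho K x i j)"
    unfolding Sc_def Wd_decomp[OF assms] by (rule sum.union_disjoint[OF fA dis])
  also have "(\<Sum>x\<in>?A. rho K x i j) = (if k \<ge> 1 then RD (Sc K m (k - 1)) i j else 0)"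
  proof (cases "k \<ge> 1")
    case True
    have "(\<Sum>x\<in>(\<lambda>x. x @ [True]) ` Wd m (k - 1). rho K x i j) = (\<Sum>x\<in>Wd m (k - 1). rho K (x @ [True]) i j)"
      by (subst sum.reindex) (auto simp: inj_on_def)
    also have "\<dots> = RD (Sc K m (k - 1)) i j"
      by (simp add: rho_snoc RX_def sum_RD Sc_def[abs_def])
    finally show ?thesis using True by simp
  qed simp
  also have "(\<Sum>x\<in>?B. rho K x i j) = (if m \<ge> 1 then RE K (Sc K (m - 1) k) i j else 0)"
  proof (cases "m \<ge> 1")
    case True
    have "(\<Sum>x\<in>(\<lambda>x. x @ [False]) ` Wd (m - 1) k. rho K x i j) = (\<Sum>x\<in>Wd (m - 1) k. rho K (x @ [False]) i j)"
      by (subst sum.reindex) (auto simp: inj_on_def)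
    also have "\<dots> = RE K (Sc K (m - 1) k) i j"
      by (simp add: rho_snoc RX_def sum_RE Sc_def[abs_def])
    finally show ?thesis using True by simp
  qed simp
  finally show ?thesis .
qed


lemma Esum:
  assumes "k \<le> K"
  shows "(\<Sum>j'=j..K. Fz m' k p (int k - int j')) = (if j \<le> k then (\<Sum>q\<le>k - j. Fz m' k p (int q)) else 0)"
proof (cases "j \<le> k")
  case False
  then show ?thesis by (auto intro!: sum.neutral simp: Fz_negq)
next
  case True
  have split: "{j..K} = {j..k} \<union> {Suc k..K}" using True assms by auto
  have "(\<Sum>j'=j..K. Fz m' k p (int k - int j')) = (\<Sum>j'=j..k. Fz m' k p (int k - int j')) + (\<Sum>j'=Suc k..K. Fz m' k p (int k - int j'))"
    unfolding split by (rule sum.union_disjoint) auto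
  also have "(\<Sum>j'=Suc k..K. Fz m' k p (int k - int j')) = 0"
    by (auto intro!: sum.neutral simp: Fz_negq)
  also have "(\<Sum>j'=j..k. Fz m' k p (int k - int j')) = (\<Sum>q\<le>k - j. Fz m' k p (int q))"
    by (rule sum.reindex_bij_witness[of _ "\<lambda>b. k - b" "\<lambda>a. k - a"]) (use True in \<open>auto simp: of_nat_diff\<close>)
  finally show ?thesis using True by simp
qed

lemma comb:
  assumes "k \<ge> 1"
  shows "Fz m (k - 1) P Q + (mc (int k) (P - 1) * mc (int m) Q - mc (int k + 1) (P - 2) * mc (int m + 1) (Q - 1)) = Fz m k P Q"
proof -
  have k1: "int (k - 1) = int k - 1" using assms by simp
  have p1: "mc (int k) P = mc (int k - 1) P + mc (int k) (P - 1)" by (rule mc_pascal)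
  have p2: "mc (int k + 1) (P - 1) = mc (int k) (P - 1) + mc (int k + 1) (P - 2)"
    using mc_pascal[of "int k + 1" "P - 1"] by simp
  show ?thesis unfolding Fz_mc k1 p1 p2 by (simp add: algebra_simps)
qed

lemma Sc_closed:
  "m + k \<le> K \<Longrightarrow> Sc K m k i j = Fz m k (int m - int i) (int k - int j)"
proof (induction "m + k" arbitrary: m k i j rule: less_induct)
  case less
  show ?case
  proof (cases "m + k = 0")
    case True
    then have "m = 0" "k = 0" by auto
    then show ?thesis by (simp add: Sc_def Wd_00 rho_Nil delta0_def Fz_m0)
  next
    case False
    then have mk: "m + k \<ge> 1" by linarith
    have IHD: "Sc K m (k - 1) = (\<lambda>i j. Fz m (k - 1) (int m - int i) (int (k - 1) - int j))" if "k \<ge> 1"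
      using less that by (intro ext) simp
    have IHE: "Sc K (m - 1) k = (\<lambda>i j. Fz (m - 1) k (int (m - 1) - int i) (int k - int j))" if "m \<ge> 1"
      using less that by (intro ext) simp
    have kK: "k \<le> K" using less by simp
    note rec = Sc_rec[OF mk, of K i j]
    show ?thesis
    proof (cases "j = 0")
      case j0: True
      have D0: "(if k \<ge> 1 then RD (Sc K m (k - 1)) i j else 0) = 0" using j0 by (simp add: RD_def)
      show ?thesis
      proof (cases "i = 0")
        case i0: True
        have E0: "(if m \<ge> 1 then RE K (Sc K (m - 1) k) i j else 0) = 0" using i0 j0 by (simp add: RE_def)
        have "Fz m k (int m) (int k) = 0"
        proof (cases "m \<ge> 1 \<and> k \<ge> 1")
          case True then show ?thesis using Fz_diag by simp
        next
          case False
          then have "m = 0 \<or> k = 0" by auto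
          then show ?thesis using mk by (auto simp: Fz_mc mc_left0 mc_neg mc_zero)
        qed
        then show ?thesis using rec D0 E0 i0 j0 by simp
      next
        case i1: False
        show ?thesis
        proof (cases "m \<ge> 1")
          case m1: True
          have pe: "int (m - 1) - int (i - 1) = int m - int i" using m1 i1 by simp
          have "RE K (Sc K (m - 1) k) i j = (\<Sum>j'\<le>K. Fz (m - 1) k (int m - int i) (int k - int j'))"
            using i1 j0 m1 unfolding IHE[OF m1] RE_def by (simp add: of_nat_diff)
          also have "\<dots> = (\<Sum>j'=0..K. Fz (m - 1) k (int m - int i) (int k - int j'))"
            by (simp add: atLeast0AtMost)
          also have "\<dots> = (\<Sum>q\<le>k. Fz (m - 1) k (int m - int i) (int q))"
            using Esum[OF kK, where j=0 and m'="m - 1" and p="int m - int i"] by simp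
          also have "\<dots> = Fz m k (int m - int i) (int k)"
            unfolding Fz_sum using m1 by (simp add: Fz_mc of_nat_diff add.commute)
          finally show ?thesis using rec D0 m1 j0 by simp
        next
          case False
          then have "m = 0" by simp
          then show ?thesis using rec D0 i1 j0 by (simp add: Fz_negp)
        qed
      qed
    next
      case j1: False
      have E: "(if m \<ge> 1 then RE K (Sc K (m - 1) k) i j else 0)
             = (if m \<ge> 1 \<and> j \<le> k then mc (int k) (int m - int i - 1) * mc (int m) (int k - int j)
                   - mc (int k + 1) (int m - int i - 2) * mc (int m + 1) (int k - int j - 1) else 0)"
      proof (cases "m \<ge> 1")
        case m1: True
        have pe: "int (m - 1) - int i = int m - int i - 1" using m1 by simp
        have "RE K (Sc K (m - 1) k) i j = (\<Sum>j'=j..K. Fz (m - 1) k (int m - int i - 1) (int k - int j'))"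
          using j1 m1 unfolding IHE[OF m1] RE_def by (simp add: of_nat_diff algebra_simps)
        also have "\<dots> = (if j \<le> k then (\<Sum>q\<le>k - j. Fz (m - 1) k (int m - int i - 1) (int q)) else 0)"
          by (rule Esum[OF kK])
        also have "\<dots> = (if j \<le> k then mc (int k) (int m - int i - 1) * mc (int m) (int k - int j)
                   - mc (int k + 1) (int m - int i - 2) * mc (int m + 1) (int k - int j - 1) else 0)"
          unfolding Fz_sum using m1 by (simp add: of_nat_diff algebra_simps)
        finally show ?thesis using m1 by simp
      qed simp
      have D: "(if k \<ge> 1 then RD (Sc K m (k - 1)) i j else 0)
             = (if k \<ge> 1 then Fz m (k - 1) (int m - int i) (int k - int j) else 0)"
      proof (cases "k \<ge> 1")
        case k1: True
        have "int (k - 1) - int (j - 1) = int k - int j" using k1 j1 by simp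
        then show ?thesis using k1 j1 unfolding IHD[OF k1] RD_def by simp
      qed simp
      show ?thesis
      proof (cases "j \<le> k")
        case False
        then show ?thesis using rec D E by (auto simp: Fz_negq)
      next
        case jk: True
        then have k1: "k \<ge> 1" using j1 by simp
        show ?thesis
        proof (cases "m \<ge> 1")
          case m1: True
          show ?thesis using rec D E k1 m1 jk comb[OF k1, of m "int m - int i" "int k - int j"]
            by (simp add: algebra_simps)
        next
          case False
          then have m0: "m = 0" by simp
          show ?thesis
          proof (cases "i = 0")
            case True
            then show ?thesis using rec D E k1 m0 by (simp add: Fz_m0)
          next
            case False
            then show ?thesis using rec D E k1 m0 by (simp add: Fz_negp)
          qed
        qed
      qed
    qed
  qed
qed



lemma val_sum:
  "(\<Sum>x\<in>A. val K a b (c x)) = val K a b (\<lambda>i j. \<Sum>x\<in>A. c x i j)"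
proof -
  have "(\<Sum>x\<in>A. val K a b (c x)) = (\<Sum>x\<in>A. \<Sum>i\<le>K. \<Sum>j\<le>K. c x i j * a ^ i * b ^ j)"
    by (simp add: val_def)
  also have "\<dots> = (\<Sum>i\<le>K. \<Sum>x\<in>A. \<Sum>j\<le>K. c x i j * a ^ i * b ^ j)"
    by (rule sum.swap)
  also have "\<dots> = (\<Sum>i\<le>K. \<Sum>j\<le>K. \<Sum>x\<in>A. c x i j * a ^ i * b ^ j)"
    by (rule sum.cong[OF refl], rule sum.swap)
  also have "\<dots> = val K a b (\<lambda>i j. \<Sum>x\<in>A. c x i j)"
    by (simp add: val_def sum_distrib_right)
  finally show ?thesis .
qed

lemma count_sum: "(\<Sum>x\<in>Wd m k. mu K a b x) = val K a b (Sc K m k)"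
  by (simp add: mu_def val_sum Sc_def[abs_def])

lemma pow_cancel:
  fixes x :: real
  assumes "x \<noteq> 0" "j \<le> m"
  shows "x ^ (m + k) * (1 / x) ^ (m - j) = x ^ k * x ^ j"
proof -
  have "x ^ (m + k) = x ^ (m - j) * x ^ (k + j)"
    using assms(2) by (simp add: power_add[symmetric])
  then show ?thesis using assms(1) by (simp add: power_one_over field_simps power_add)
qed

lemma N_eq:
  assumes a: "\<alpha> > 0" and b: "\<beta> > 0" and mk: "m + k = n"
  shows "\<alpha> ^ n * \<beta> ^ n * val n (1 / \<alpha>) (1 / \<beta>) (Sc n m k) = Nmk \<alpha> \<beta> m k"
proof -
  let ?F = "\<lambda>i j. Fz m k (int m - int i) (int k - int j) * (1 / \<alpha>) ^ i * (1 / \<beta>) ^ j"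
  have "val n (1 / \<alpha>) (1 / \<beta>) (Sc n m k) = (\<Sum>i\<le>n. \<Sum>j\<le>n. ?F i j)"
  proof -
    have "\<And>i j. Sc n m k i j = Fz m k (int m - int i) (int k - int j)"
      by (rule Sc_closed) (use mk in simp)
    then show ?thesis by (simp add: val_def)
  qed
  also have "\<dots> = (\<Sum>i\<le>m. \<Sum>j\<le>n. ?F i j)"
    by (rule sum.mono_neutral_right) (use mk in \<open>auto intro!: sum.neutral simp: Fz_negp\<close>)
  also have "\<dots> = (\<Sum>i\<le>m. \<Sum>j\<le>k. ?F i j)"
    by (rule sum.cong[OF refl], rule sum.mono_neutral_right) (use mk in \<open>auto simp: Fz_negq\<close>)
  also have "\<dots> = (\<Sum>j'\<le>m. \<Sum>j\<le>k. ?F (m - j') j)"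
    by (rule sum.reindex_bij_witness[of _ "\<lambda>a. m - a" "\<lambda>a. m - a"]) auto
  also have "\<dots> = (\<Sum>j'\<le>m. \<Sum>l\<le>k. ?F (m - j') (k - l))"
    by (rule sum.cong[OF refl], rule sum.reindex_bij_witness[of _ "\<lambda>a. k - a" "\<lambda>a. k - a"]) auto
  finally have v: "val n (1 / \<alpha>) (1 / \<beta>) (Sc n m k) = (\<Sum>j'\<le>m. \<Sum>l\<le>k. ?F (m - j') (k - l))" .
  have t: "\<alpha> ^ n * \<beta> ^ n * ?F (m - j') (k - l) = \<alpha> ^ k * \<beta> ^ m * (\<alpha> ^ j' * \<beta> ^ l * Fz m k (int j') (int l))"
    if "j' \<le> m" "l \<le> k" for j' l
  proof -
    have e1: "int m - int (m - j') = int j'" "int k - int (k - l) = int l" using that by auto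
    have p1: "\<alpha> ^ n * (1 / \<alpha>) ^ (m - j') = \<alpha> ^ k * \<alpha> ^ j'"
      using pow_cancel[of \<alpha> j' m k] a that mk by simp
    have p2: "\<beta> ^ n * (1 / \<beta>) ^ (k - l) = \<beta> ^ m * \<beta> ^ l"
      using pow_cancel[of \<beta> l k m] b that mk by (simp add: add.commute)
    have "\<alpha> ^ n * \<beta> ^ n * ?F (m - j') (k - l)
        = Fz m k (int j') (int l) * (\<alpha> ^ n * (1 / \<alpha>) ^ (m - j')) * (\<beta> ^ n * (1 / \<beta>) ^ (k - l))"
      unfolding e1 by (simp only: mult_ac)
    also have "\<dots> = \<alpha> ^ k * \<beta> ^ m * (\<alpha> ^ j' * \<beta> ^ l * Fz m k (int j') (int l))"
      unfolding p1 p2 by (simp only: mult_ac)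
    finally show ?thesis .
  qed
  have "\<alpha> ^ n * \<beta> ^ n * val n (1 / \<alpha>) (1 / \<beta>) (Sc n m k)
      = \<alpha> ^ k * \<beta> ^ m * (\<Sum>j'\<le>m. \<Sum>l\<le>k. \<alpha> ^ j' * \<beta> ^ l * Fz m k (int j') (int l))"
    unfolding v sum_distrib_left by (intro sum.cong refl t) auto
  also have "\<dots> = Nmk \<alpha> \<beta> m k"
    by (simp add: Nmk_def Fz_def atLeast0AtMost)
  finally show ?thesis .
qed



theorem corollary6p2:
  fixes n k :: nat and \<alpha> \<beta> :: real and \<pi> :: "bool list \<Rightarrow> real"
  assumes "n \<ge> 1" and "\<alpha> > 0" and "\<beta> > 0"
    and "tasep_stationary n \<alpha> \<beta> \<pi>"
    and "k \<le> n"
  shows "(\<Sum>x\<in>{x\<in>tasep_states n. length (filter id x) = k}. \<pi> x)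
         = Nmk \<alpha> \<beta> (n - k) k / Zn \<alpha> \<beta> n"
proof -
  note n = assms(1) and a = assms(2) and b = assms(3) and st = assms(4) and kn = assms(5)
  define S where "S = tasep_states n"
  define Mu where "Mu = mu n (1 / \<alpha>) (1 / \<beta>)"
  define T where "T = (\<Sum>x\<in>S. Mu x)"
  define c where "c = \<alpha> ^ n * \<beta> ^ n"
  have c0: "c \<noteq> 0" using a b by (simp add: c_def)
  have pix: "\<pi> x = Mu x / T" if "x \<in> S" for x
    using unique[OF n a b st, of x] that by (simp add: S_def Mu_def T_def)
  have Ck: "{x\<in>S. length (filter id x) = j} = Wd (n - j) j" if "j \<le> n" for j
    using that by (auto simp: S_def tasep_states_def Wd_def)
  have cnt: "(\<Sum>x\<in>{x\<in>S. length (filter id x) = j}. Mu x) = Nmk \<alpha> \<beta> (n - j) j / c" if "j \<le> n" for j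
  proof -
    have "(\<Sum>x\<in>{x\<in>S. length (filter id x) = j}. Mu x) = val n (1 / \<alpha>) (1 / \<beta>) (Sc n (n - j) j)"
      unfolding Ck[OF that] Mu_def by (rule count_sum)
    moreover have "c * val n (1 / \<alpha>) (1 / \<beta>) (Sc n (n - j) j) = Nmk \<alpha> \<beta> (n - j) j"
      unfolding c_def by (rule N_eq[OF a b]) (use that in simp)
    ultimately show ?thesis using c0 by (simp add: field_simps)
  qed
  have fS: "finite S" by (simp add: S_def finite_states)
  have "T = (\<Sum>j\<in>{0..n}. \<Sum>x\<in>{x\<in>S. length (filter id x) = j}. Mu x)"
    unfolding T_def
    by (rule sum.group[symmetric, OF fS]) (auto simp: S_def tasep_states_def)
  also have "\<dots> = (\<Sum>j\<in>{0..n}. Nmk \<alpha> \<beta> (n - j) j / c)"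
    by (rule sum.cong[OF refl]) (simp add: cnt)
  also have "\<dots> = Zn \<alpha> \<beta> n / c"
    by (simp add: Zn_def sum_divide_distrib)
  finally have TZ: "T = Zn \<alpha> \<beta> n / c" .
  have "(\<Sum>x\<in>{x\<in>tasep_states n. length (filter id x) = k}. \<pi> x)
      = (\<Sum>x\<in>{x\<in>S. length (filter id x) = k}. Mu x / T)"
    by (rule sum.cong) (auto simp: S_def pix)
  also have "\<dots> = (Nmk \<alpha> \<beta> (n - k) k / c) / T"
    by (simp add: sum_divide_distrib[symmetric] cnt[OF kn])
  also have "\<dots> = Nmk \<alpha> \<beta> (n - k) k / Zn \<alpha> \<beta> n"
    using c0 by (simp add: TZ)
  finally show ?thesis .
qed

end
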